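(* Let $k,s$ be positive integers and suppose that $K_{k+1,s}$ admits a balanced $k$-page embedding. Let $n\ge s$ be an integer and $q:=n\bmod s$. Then \[ \nu_k(K_{k+1,n}) \le q\binom{\frac{n-q}{s}+1}{2} + (s-q)\binom{\frac{n-q}{s}}{2}. \]
   Context: A book with $k$ pages consists of a line (the spine) and $k$ half-planes (the pages) whose common boundary is the spine. A $k$-page drawing of a graph places all vertices on the spine and draws each edge inside a single page; a $k$-page embedding is one without crossings. $\nu_k(G)$ is the minimum number of crossings over all $k$-page drawings of $G$. In $K_{k+1,s}$, call the $k+1$ vertices of degree $s$ black and the $s$ vertices of degree $k+1$ white. In a $k$-page embedding, the load of a white vertex $v$ in a page is the number of edges incident with $v$ drawn in that page. A $k$-page embedding of $K_{k+1,s}$ is balanced if every white vertex has load exactly $1$ in $k-1$ of the pages (hence load $2$ in the remaining page). Convention: $\binom{a}{b}=0$ whenever $a<b$. *)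

theory Defs
  imports Main
begin

text \<open>Complete bipartite graph K_{m,s}: black vertices Inl i (i < m), white vertices
  Inr j (j < s), edges (i,j) joining Inl i and Inr j.
  A k-page drawing is given by an injective placement of the vertices on the spine
  (positions in nat, only the order matters) and a page assignment of the edges.
  Two edges in the same page cross iff their endpoints strictly interleave along the spine.\<close>

definition kb_vertices :: "nat \<Rightarrow> nat \<Rightarrow> (nat + nat) set" where
  "kb_vertices m s = Inl ` {..<m} \<union> Inr ` {..<s}"

definition book_drawing :: "nat \<Rightarrow> nat \<Rightarrow> nat \<Rightarrow> (nat + nat \<Rightarrow> nat) \<Rightarrow> (nat \<Rightarrow> nat \<Rightarrow> nat) \<Rightarrow> bool" where
  "book_drawing k m s pos pg \<longleftrightarrow>
     inj_on pos (kb_vertices m s) \<and> (\<forall>i<m. \<forall>j<s. pg i j < k)"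

definition edge_lo :: "(nat + nat \<Rightarrow> nat) \<Rightarrow> nat \<times> nat \<Rightarrow> nat" where
  "edge_lo pos e = min (pos (Inl (fst e))) (pos (Inr (snd e)))"

definition edge_hi :: "(nat + nat \<Rightarrow> nat) \<Rightarrow> nat \<times> nat \<Rightarrow> nat" where
  "edge_hi pos e = max (pos (Inl (fst e))) (pos (Inr (snd e)))"

text \<open>Each crossing pair {e,f} is counted once, as the ordered pair with lo e < lo f.\<close>
definition crossings :: "nat \<Rightarrow> nat \<Rightarrow> (nat + nat \<Rightarrow> nat) \<Rightarrow> (nat \<Rightarrow> nat \<Rightarrow> nat) \<Rightarrow> nat" where
  "crossings m s pos pg = card {(e, f). e \<in> {..<m} \<times> {..<s} \<and> f \<in> {..<m} \<times> {..<s} \<and>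
      pg (fst e) (snd e) = pg (fst f) (snd f) \<and>
      edge_lo pos e < edge_lo pos f \<and> edge_lo pos f < edge_hi pos e \<and> edge_hi pos e < edge_hi pos f}"

definition book_embedding :: "nat \<Rightarrow> nat \<Rightarrow> nat \<Rightarrow> (nat + nat \<Rightarrow> nat) \<Rightarrow> (nat \<Rightarrow> nat \<Rightarrow> nat) \<Rightarrow> bool" where
  "book_embedding k m s pos pg \<longleftrightarrow> book_drawing k m s pos pg \<and> crossings m s pos pg = 0"

definition book_cr :: "nat \<Rightarrow> nat \<Rightarrow> nat \<Rightarrow> nat" where
  "book_cr k m s = (LEAST c. \<exists>pos pg. book_drawing k m s pos pg \<and> crossings m s pos pg = c)"

definition load :: "nat \<Rightarrow> (nat \<Rightarrow> nat \<Rightarrow> nat) \<Rightarrow> nat \<Rightarrow> nat \<Rightarrow> nat" where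
  "load m pg j p = card {i. i < m \<and> pg i j = p}"

definition balanced_embedding :: "nat \<Rightarrow> nat \<Rightarrow> (nat + nat \<Rightarrow> nat) \<Rightarrow> (nat \<Rightarrow> nat \<Rightarrow> nat) \<Rightarrow> bool" where
  "balanced_embedding k s pos pg \<longleftrightarrow> book_embedding k (k+1) s pos pg \<and>
     (\<forall>j<s. card {p. p < k \<and> load (k+1) pg j p = 1} = k - 1)"

end

theory Submission imports Defs begin

definition crs :: "nat \<Rightarrow> nat \<Rightarrow> nat \<Rightarrow> nat \<Rightarrow> bool" where
  "crs a b c d \<longleftrightarrow> min a b < min c d \<and> min c d < max a b \<and> max a b < max c d"

lemma crs_distinct: "crs a b c d \<Longrightarrow> a \<noteq> c \<and> a \<noteq> d \<and> b \<noteq> c \<and> b \<noteq> d"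
  unfolding crs_def by (auto simp: min_def max_def split: if_splits)

lemma crs_match1: "crs a b c d \<Longrightarrow> crs a d c b \<Longrightarrow> False"
  unfolding crs_def by (auto simp: min_def max_def split: if_splits)

lemma crs_match2: "crs a b c d \<Longrightarrow> crs c b a d \<Longrightarrow> False"
  unfolding crs_def by (auto simp: min_def max_def split: if_splits)

lemma div_less_iff: "(a::nat) div M \<noteq> b div M \<Longrightarrow> a < b \<longleftrightarrow> a div M < b div M"
  by (metis div_le_mono le_less not_le)

lemma crs_div:
  assumes "crs a b c d"
    and "distinct [a div M, b div M, c div M, d div M]"
  shows "crs (a div M) (b div M) (c div M) (d div M)"
proof -
  have mn: "\<And>x y. min x y div M = min (x div M) (y div M)"
    by (metis div_le_mono min_absorb1 min_absorb2 nat_le_linear)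
  have mx: "\<And>x y. max x y div M = max (x div M) (y div M)"
    by (metis div_le_mono max_absorb1 max_absorb2 nat_le_linear)
  have le: "\<And>x y. (x::nat) < y \<Longrightarrow> x div M \<le> y div M" by (simp add: div_le_mono)
  have 1: "min (a div M) (b div M) \<le> min (c div M) (d div M)"
    using le[of "min a b" "min c d"] assms(1) mn unfolding crs_def by simp
  have 2: "min (c div M) (d div M) \<le> max (a div M) (b div M)"
    using le[of "min c d" "max a b"] assms(1) mn mx unfolding crs_def by simp
  have 3: "max (a div M) (b div M) \<le> max (c div M) (d div M)"
    using le[of "max a b" "max c d"] assms(1) mx unfolding crs_def by simp
  have d: "\<And>x y. x \<in> {a div M, b div M} \<Longrightarrow> y \<in> {c div M, d div M} \<Longrightarrow> x \<noteq> y"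
    using assms(2) by auto
  have m: "min (a div M) (b div M) \<in> {a div M, b div M}" "max (a div M) (b div M) \<in> {a div M, b div M}"
    "min (c div M) (d div M) \<in> {c div M, d div M}" "max (c div M) (d div M) \<in> {c div M, d div M}"
    by (auto simp: min_def max_def)
  have "min (a div M) (b div M) \<noteq> min (c div M) (d div M)"
    "min (c div M) (d div M) \<noteq> max (a div M) (b div M)"
    "max (a div M) (b div M) \<noteq> max (c div M) (d div M)"
    using d[OF m(1) m(3)] d[OF m(2) m(3)] d[OF m(2) m(4)] by auto
  then show ?thesis using le_neq_trans[OF 1] le_neq_trans[OF 2] le_neq_trans[OF 3]
    unfolding crs_def by metis
qed

lemma sum_div_q: "q \<le> s \<Longrightarrow> (\<Sum>b<s*a+q. b div (s::nat)) = (\<Sum>b<s*a. b div s) + q*a"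
proof (induction q)
  case (Suc q)
  then have "(s*a+q) div s = a" by auto
  then show ?case using Suc by simp
qed simp

lemma sum_div_a: "s > 0 \<Longrightarrow> (\<Sum>b<s*a. b div (s::nat)) = s * (a choose 2)"
proof (induction a)
  case (Suc a)
  have "(\<Sum>b<s*Suc a. b div s) = (\<Sum>b<s*a+s. b div s)" by (simp add: algebra_simps)
  also have "\<dots> = s*(a choose 2) + s*a" using sum_div_q[of s s a] Suc by simp
  also have "\<dots> = s * (Suc a choose 2)"
    by (simp add: numeral_2_eq_2 algebra_simps)
  finally show ?case .
qed simp

lemma crs_swap: "crs a b c d \<Longrightarrow> crs c d a b \<Longrightarrow> False"
  unfolding crs_def by auto

definition crset :: "nat \<Rightarrow> nat \<Rightarrow> (nat + nat \<Rightarrow> nat) \<Rightarrow> (nat \<Rightarrow> nat \<Rightarrow> nat) \<Rightarrow> ((nat \<times> nat) \<times> (nat \<times> nat)) set" where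
  "crset m s pos pg = {(e, f). e \<in> {..<m} \<times> {..<s} \<and> f \<in> {..<m} \<times> {..<s} \<and>
      pg (fst e) (snd e) = pg (fst f) (snd f) \<and>
      edge_lo pos e < edge_lo pos f \<and> edge_lo pos f < edge_hi pos e \<and> edge_hi pos e < edge_hi pos f}"

lemma crossings_crset: "crossings m s pos pg = card (crset m s pos pg)"
  unfolding crossings_def crset_def ..

lemma mem_crset: "((i1,j1),(i2,j2)) \<in> crset m s pos pg \<longleftrightarrow> i1<m \<and> j1<s \<and> i2<m \<and> j2<s \<and> pg i1 j1 = pg i2 j2 \<and>
   crs (pos (Inl i1)) (pos (Inr j1)) (pos (Inl i2)) (pos (Inr j2))"
  by (simp add: crset_def edge_lo_def edge_hi_def crs_def)

lemma finite_crset: "finite (crset m s pos pg)"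
proof -
  have "crset m s pos pg \<subseteq> ({..<m} \<times> {..<s}) \<times> ({..<m} \<times> {..<s})"
    unfolding crset_def by auto
  then show ?thesis by (rule finite_subset) auto
qed

definition Pset :: "nat \<Rightarrow> nat \<Rightarrow> (nat \<times> nat) set" where
  "Pset s n = {(a,b). a < b \<and> b < n \<and> a mod s = b mod s}"

lemma card_fibre: assumes "s > 0"
  shows "card {a. a < n \<and> a mod s = n mod (s::nat)} = n div s"
proof -
  have "{a. a < n \<and> a mod s = n mod s} = (\<lambda>t. n mod s + s*t) ` {..<n div s}"
  proof (rule set_eqI, rule iffI)
    fix a assume a: "a \<in> {a. a < n \<and> a mod s = n mod s}"
    have e1: "a = a mod s + s*(a div s)" "n = n mod s + s*(n div s)" by simp_all
    have "a div s < n div s"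
    proof (rule ccontr)
      assume "\<not> a div s < n div s"
      then have "s*(n div s) \<le> s*(a div s)" by (simp add: mult_le_mono2)
      moreover have "a < n" "a mod s = n mod s" using a by auto
      ultimately show False using e1 by linarith
    qed
    moreover have "a = n mod s + s * (a div s)" using a e1 by simp
    ultimately show "a \<in> (\<lambda>t. n mod s + s*t) ` {..<n div s}" by blast
  next
    fix a assume "a \<in> (\<lambda>t. n mod s + s*t) ` {..<n div s}"
    then obtain t where t: "t < n div s" "a = n mod s + s*t" by auto
    have "s * Suc t \<le> s * (n div s)" using t(1) by (simp only: mult_le_mono2 Suc_leI)
    then have h1: "s * t + s \<le> s * (n div s)" by simp
    have h2: "n mod s < s" using assms by simp
    have h3: "n = n mod s + s*(n div s)" by simp
    have "a < n" using t(2) h1 h2 h3 by linarith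
    moreover have "a mod s = n mod s" using t(2) by simp
    ultimately show "a \<in> {a. a < n \<and> a mod s = n mod s}" by simp
  qed
  moreover have "inj_on (\<lambda>t. n mod s + s*t) {..<n div s}" using assms by (auto simp: inj_on_def)
  ultimately show ?thesis by (simp add: card_image)
qed

lemma card_Pset: assumes "s > 0" shows "card (Pset s n) = (\<Sum>b<n. b div s)"
proof (induction n)
  case 0
  then show ?case by (simp add: Pset_def)
next
  case (Suc n)
  have eq: "Pset s (Suc n) = Pset s n \<union> (\<lambda>a. (a,n)) ` {a. a < n \<and> a mod s = n mod s}"
    unfolding Pset_def by (auto simp: less_Suc_eq image_iff)
  have fin: "finite (Pset s n)" unfolding Pset_def
    by (rule finite_subset[of _ "{..<n} \<times> {..<n}"]) auto
  have dis: "Pset s n \<inter> (\<lambda>a. (a,n)) ` {a. a < n \<and> a mod s = n mod s} = {}"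
    unfolding Pset_def by auto
  have c2: "card ((\<lambda>a. (a,n)) ` {a. a < n \<and> a mod s = n mod s}) = n div s"
    using card_fibre[OF assms] by (simp add: card_image inj_on_def)
  show ?case using Suc eq fin dis c2 by (simp add: card_Un_disjoint)
qed

lemma two_page:
  assumes bal: "card {p. p < k \<and> load (k+1) pg u p = 1} = k - 1"
    and pgk: "\<forall>i<k+1. pg i u < k"
    and h: "i1 \<noteq> i2" "i1 < k+1" "i2 < k+1" "pg i1 u = pg i2 u"
    and h': "i1' \<noteq> i2'" "i1' < k+1" "i2' < k+1" "pg i1' u = pg i2' u"
  shows "{i1', i2'} = {i1, i2}"
proof -
  define A where "A p = {i. i < k+1 \<and> pg i u = p}" for p
  have ld: "load (k+1) pg u p = card (A p)" for p unfolding load_def A_def ..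
  have finA: "finite (A p)" for p unfolding A_def by auto
  have U: "(\<Union>p\<in>{..<k}. A p) = {..<k+1}" unfolding A_def using pgk by auto
  have tot: "(\<Sum>p<k. card (A p)) = k+1"
  proof -
    have disj: "\<forall>i\<in>{..<k}. \<forall>j\<in>{..<k}. i \<noteq> j \<longrightarrow> A i \<inter> A j = {}"
      unfolding A_def by auto
    have "card (\<Union>p\<in>{..<k}. A p) = (\<Sum>p<k. card (A p))"
      by (rule card_UN_disjoint) (use finA disj in auto)
    then show ?thesis using U by simp
  qed
  define L1 where "L1 = {p. p < k \<and> card (A p) = 1}"
  have cL1: "card L1 = k - 1" using bal unfolding L1_def ld .
  have L1sub: "L1 \<subseteq> {..<k}" unfolding L1_def by auto
  have sL1: "(\<Sum>p\<in>L1. card (A p)) = k - 1" using cL1 unfolding L1_def by simp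
  have split: "(\<Sum>p<k. card (A p)) = (\<Sum>p\<in>L1. card (A p)) + (\<Sum>p\<in>{..<k} - L1. card (A p))"
    using sum.subset_diff[OF L1sub, of "\<lambda>p. card (A p)"] by simp
  have kpos: "k > 0" using pgk h(2) by auto
  have R2: "(\<Sum>p\<in>{..<k} - L1. card (A p)) = 2" using tot split sL1 kpos by linarith
  define p where "p = pg i1 u"
  define p' where "p' = pg i1' u"
  have sub: "{i1,i2} \<subseteq> A p" "{i1',i2'} \<subseteq> A p'" using h h' unfolding A_def p_def p'_def by auto
  have c2: "card (A p) \<ge> 2" "card (A p') \<ge> 2"
    using card_mono[OF finA sub(1)] card_mono[OF finA sub(2)] h(1) h'(1) by auto
  have inR: "p \<in> {..<k} - L1" "p' \<in> {..<k} - L1"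
    using c2 pgk h(2) h'(2) unfolding L1_def p_def p'_def by auto
  have pp: "p = p'"
  proof (rule ccontr)
    assume "p \<noteq> p'"
    then have "(\<Sum>q\<in>{p,p'}. card (A q)) = card (A p) + card (A p')" by simp
    moreover have "(\<Sum>q\<in>{p,p'}. card (A q)) \<le> (\<Sum>p\<in>{..<k} - L1. card (A p))"
      by (rule sum_mono2) (use inR in auto)
    ultimately show False using R2 c2 by linarith
  qed
  have "card (A p) \<le> 2" using member_le_sum[OF inR(1), of "\<lambda>p. card (A p)"] R2 by simp
  then have e1: "A p = {i1,i2}" using card_seteq[OF finA sub(1)] h(1) by simp
  have "A p = {i1',i2'}" using card_seteq[OF finA sub(2)] h'(1) \<open>card (A p) \<le> 2\<close> pp by simp
  then show ?thesis using e1 by simp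
qed

definition npos :: "nat \<Rightarrow> nat \<Rightarrow> (nat + nat \<Rightarrow> nat) \<Rightarrow> nat + nat \<Rightarrow> nat" where
  "npos M s pos v = (case v of Inl i \<Rightarrow> M * pos (Inl i) | Inr j \<Rightarrow> M * pos (Inr (j mod s)) + (j+1))"

lemma final_arith:
  assumes "s > 0"
  shows "(n mod s) * (((n - n mod s) div s + 1) choose 2) + (s - n mod s) * (((n - n mod s) div s) choose 2)
     = s * ((n div s) choose 2) + (n mod s) * (n div s)"
proof -
  have e: "(n - n mod s) div s = n div s" using assms by (simp add: minus_mod_eq_mult_div)
  have c: "(a + 1) choose 2 = (a choose 2) + a" for a by (simp add: numeral_2_eq_2)
  have q: "n mod s \<le> s" using assms by (simp add: less_imp_le)
  have X: "(s - n mod s) * X + (n mod s) * X = s * X" for X using q by (metis add_mult_distrib le_add_diff_inverse2)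
  have 1: "(n mod s)*((n div s choose 2) + n div s) = (n mod s)*(n div s choose 2) + (n mod s)*(n div s)"
    by (simp add: add_mult_distrib2)
  show ?thesis unfolding e c using 1 X[of "n div s choose 2"] by linarith
qed

theorem proposition18:
  fixes k s n :: nat
  assumes "k > 0" and "s > 0"
    and "\<exists>pos pg. balanced_embedding k s pos pg"
    and "n \<ge> s"
  shows "book_cr k (k+1) n \<le>
    (n mod s) * (((n - n mod s) div s + 1) choose 2) + (s - n mod s) * (((n - n mod s) div s) choose 2)"
proof -
  obtain pos pg where B: "balanced_embedding k s pos pg" using assms(3) by blast
  have inj: "inj_on pos (kb_vertices (k+1) s)" and pgk: "\<forall>i<k+1. \<forall>j<s. pg i j < k"
    and cr0: "crossings (k+1) s pos pg = 0"
    and bal: "\<forall>j<s. card {p. p<k \<and> load (k+1) pg j p = 1} = k-1"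
    using B unfolding balanced_embedding_def book_embedding_def book_drawing_def by auto
  have old_empty: "crset (k+1) s pos pg = {}" using cr0 finite_crset by (simp add: crossings_crset)
  define M where "M = n+2"
  define pos' where "pos' = npos M s pos"
  define pg' where "pg' = (\<lambda>i j. pg i (j mod s))"
  have Mpos: "M > 0" unfolding M_def by simp
  have divL: "pos' (Inl i) div M = pos (Inl i)" for i using Mpos by (simp add: pos'_def npos_def)
  have dm: "(M*x + r) div M = x" "(M*x + r) mod M = r" if "r < M" for x r
    using that by simp_all
  have divR: "j < n \<Longrightarrow> pos' (Inr j) div M = pos (Inr (j mod s))" for j
    using dm(1)[of "j+1"] by (simp add: pos'_def npos_def M_def)
  have modL: "pos' (Inl i) mod M = 0" for i by (simp add: pos'_def npos_def)
  have modR: "j < n \<Longrightarrow> pos' (Inr j) mod M = j+1" for j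
    using dm(2)[of "j+1"] by (simp add: pos'_def npos_def M_def)
  have draw: "book_drawing k (k+1) n pos' pg'"
    unfolding book_drawing_def
  proof
    show "inj_on pos' (kb_vertices (k+1) n)"
    proof (rule inj_onI)
      fix v w assume v: "v \<in> kb_vertices (k+1) n" and w: "w \<in> kb_vertices (k+1) n"
        and eq: "pos' v = pos' w"
      show "v = w"
      proof (cases v)
        case (Inl i)
        then have i: "i < k+1" using v by (auto simp: kb_vertices_def)
        show ?thesis
        proof (cases w)
          case (Inl i')
          then have i': "i' < k+1" using w by (auto simp: kb_vertices_def)
          have "pos (Inl i) = pos (Inl i')" using eq divL Inl \<open>v = Inl i\<close> by metis
          moreover have "Inl i \<in> kb_vertices (k+1) s" "Inl i' \<in> kb_vertices (k+1) s"
            using i i' by (auto simp: kb_vertices_def)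
          ultimately have "Inl i = (Inl i' :: nat + nat)"
            using inj_onD[OF inj] by blast
          then show ?thesis using Inl \<open>v = Inl i\<close> by simp
        next
          case (Inr j')
          then have "j' < n" using w by (auto simp: kb_vertices_def)
          then have "pos' v mod M \<noteq> pos' w mod M" using modL modR Inr \<open>v = Inl i\<close> by simp
          then show ?thesis using eq by simp
        qed
      next
        case (Inr j)
        then have j: "j < n" using v by (auto simp: kb_vertices_def)
        show ?thesis
        proof (cases w)
          case (Inl i')
          then have "pos' v mod M \<noteq> pos' w mod M" using modL modR Inr j by simp
          then show ?thesis using eq by simp
        next
          case (Inr j')
          then have "j' < n" using w by (auto simp: kb_vertices_def)
          then have "j + 1 = j' + 1" using modR[OF j] modR[of j'] eq Inr \<open>v = Inr j\<close> by metis
          then show ?thesis using Inr \<open>v = Inr j\<close> by simp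
        qed
      qed
    qed
    show "\<forall>i<k+1. \<forall>j<n. pg' i j < k" using pgk assms(2) by (simp add: pg'_def)
  qed
  have le: "book_cr k (k+1) n \<le> crossings (k+1) n pos' pg'"
    unfolding book_cr_def by (rule Least_le) (use draw in blast)
  define C where "C = crset (k+1) n pos' pg'"
  have K: "i1 \<noteq> i2 \<and> j1 \<noteq> j2 \<and> j1 mod s = j2 mod s \<and> pg i1 (j1 mod s) = pg i2 (j1 mod s) \<and>
      i1 < k+1 \<and> i2 < k+1 \<and> j1 < n \<and> j2 < n \<and>
      crs (pos' (Inl i1)) (pos' (Inr j1)) (pos' (Inl i2)) (pos' (Inr j2))"
    if x: "((i1,j1),(i2,j2)) \<in> C" for i1 j1 i2 j2
  proof -
    have r: "i1<k+1" "j1<n" "i2<k+1" "j2<n" "pg i1 (j1 mod s) = pg i2 (j2 mod s)"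
      and c: "crs (pos' (Inl i1)) (pos' (Inr j1)) (pos' (Inl i2)) (pos' (Inr j2))"
      using x unfolding C_def mem_crset pg'_def by auto
    from crs_distinct[OF c] have d: "i1 \<noteq> i2" "j1 \<noteq> j2" by auto
    have u: "j1 mod s = j2 mod s"
    proof (rule ccontr)
      assume ne: "j1 mod s \<noteq> j2 mod s"
      have vs: "Inl i1 \<in> kb_vertices (k+1) s" "Inr (j1 mod s) \<in> kb_vertices (k+1) s"
        "Inl i2 \<in> kb_vertices (k+1) s" "Inr (j2 mod s) \<in> kb_vertices (k+1) s"
        using r assms(2) by (auto simp: kb_vertices_def)
      have "distinct [pos (Inl i1), pos (Inr (j1 mod s)), pos (Inl i2), pos (Inr (j2 mod s))]"
        using vs ne d by (auto simp: inj_on_eq_iff[OF inj])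
      then have "distinct [pos' (Inl i1) div M, pos' (Inr j1) div M, pos' (Inl i2) div M, pos' (Inr j2) div M]"
        using divL divR r by simp
      from crs_div[OF c this]
      have "crs (pos (Inl i1)) (pos (Inr (j1 mod s))) (pos (Inl i2)) (pos (Inr (j2 mod s)))"
        using divL divR r by simp
      then have "((i1, j1 mod s),(i2, j2 mod s)) \<in> crset (k+1) s pos pg"
        using r assms(2) by (simp add: mem_crset)
      then show False using old_empty by simp
    qed
    show ?thesis using r c u d by simp
  qed
  define h where "h x = (min (snd (fst x)) (snd (snd x)), max (snd (fst x)) (snd (snd x)))"
    for x :: "(nat \<times> nat) \<times> (nat \<times> nat)"
  have hC: "h ` C \<subseteq> Pset s n"
  proof
    fix y assume "y \<in> h ` C"
    then obtain x where xC: "x \<in> C" and y: "y = h x" by auto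
    obtain i1 j1 i2 j2 where x: "x = ((i1,j1),(i2,j2))" by (metis prod.collapse)
    have Kx: "j1 \<noteq> j2" "j1 mod s = j2 mod s" "j1 < n" "j2 < n" using K[of i1 j1 i2 j2] xC x by auto
    show "y \<in> Pset s n" unfolding y x h_def Pset_def using Kx by (auto simp: min_def max_def)
  qed
  have injh: "inj_on h C"
  proof (rule inj_onI)
    fix x y assume xC: "x \<in> C" and yC: "y \<in> C" and hxy: "h x = h y"
    obtain i1 j1 i2 j2 where x: "x = ((i1,j1),(i2,j2))" by (metis prod.collapse)
    obtain i1' j1' i2' j2' where y: "y = ((i1',j1'),(i2',j2'))" by (metis prod.collapse)
    have Kx: "i1 \<noteq> i2 \<and> j1 \<noteq> j2 \<and> j1 mod s = j2 mod s \<and> pg i1 (j1 mod s) = pg i2 (j1 mod s) \<and>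
      i1 < k+1 \<and> i2 < k+1 \<and> j1 < n \<and> j2 < n \<and>
      crs (pos' (Inl i1)) (pos' (Inr j1)) (pos' (Inl i2)) (pos' (Inr j2))" by (rule K[OF xC[unfolded x]])
    have Ky: "i1' \<noteq> i2' \<and> j1' \<noteq> j2' \<and> j1' mod s = j2' mod s \<and> pg i1' (j1' mod s) = pg i2' (j1' mod s) \<and>
      i1' < k+1 \<and> i2' < k+1 \<and> j1' < n \<and> j2' < n \<and>
      crs (pos' (Inl i1')) (pos' (Inr j1')) (pos' (Inl i2')) (pos' (Inr j2'))" by (rule K[OF yC[unfolded y]])
    have "(min j1 j2, max j1 j2) = (min j1' j2', max j1' j2')" using hxy unfolding x y h_def by simp
    then have mm: "min j1 j2 = min j1' j2'" "max j1 j2 = max j1' j2'" by simp_all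
    have jd: "j1 \<noteq> j2" "j1' \<noteq> j2'" using Kx Ky by simp_all
    have jj: "(j1'=j1 \<and> j2'=j2) \<or> (j1'=j2 \<and> j2'=j1)" using mm jd
      by (auto simp: min_def max_def split: if_splits)
    have jm: "j1 mod s = j2 mod s" using Kx by simp
    have uu: "j1' mod s = j1 mod s" using jj jm by auto
    have us: "j1 mod s < s" using assms(2) by simp
    have b1: "card {p. p < k \<and> load (k+1) pg (j1 mod s) p = 1} = k - 1" using bal us by simp
    have p1: "\<forall>i<k+1. pg i (j1 mod s) < k" using pgk us by simp
    have xi: "i1 \<noteq> i2" "i1 < k+1" "i2 < k+1" "pg i1 (j1 mod s) = pg i2 (j1 mod s)" using Kx by blast+
    have yi4: "pg i1' (j1' mod s) = pg i2' (j1' mod s)" using Ky by blast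
    have yi: "i1' \<noteq> i2'" "i1' < k+1" "i2' < k+1" "pg i1' (j1 mod s) = pg i2' (j1 mod s)"
      using Ky apply blast+ using yi4 uu by simp
    have ii: "{i1',i2'} = {i1,i2}"
      by (rule two_page[OF b1 p1 xi yi])
    then have ii': "(i1'=i1 \<and> i2'=i2) \<or> (i1'=i2 \<and> i2'=i1)" using Ky by (auto simp: doubleton_eq_iff)
    have cx: "crs (pos' (Inl i1)) (pos' (Inr j1)) (pos' (Inl i2)) (pos' (Inr j2))" using Kx by simp
    have cy: "crs (pos' (Inl i1')) (pos' (Inr j1')) (pos' (Inl i2')) (pos' (Inr j2'))" using Ky by simp
    from ii' jj show "x = y"
    proof (elim disjE conjE)
      assume "i1' = i1" "i2' = i2" "j1' = j1" "j2' = j2"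
      then show "x = y" using x y by simp
    next
      assume "i1' = i1" "i2' = i2" "j1' = j2" "j2' = j1"
      then show "x = y" using crs_match1[OF cx] cy by simp
    next
      assume "i1' = i2" "i2' = i1" "j1' = j1" "j2' = j2"
      then show "x = y" using crs_match2[OF cx] cy by simp
    next
      assume "i1' = i2" "i2' = i1" "j1' = j2" "j2' = j1"
      then show "x = y" using crs_swap[OF cx] cy by simp
    qed
  qed
  have finP: "finite (Pset s n)" unfolding Pset_def
    by (rule finite_subset[of _ "{..<n} \<times> {..<n}"]) auto
  have "card C \<le> card (Pset s n)" by (rule card_inj_on_le[OF injh hC finP])
  also have "\<dots> = (\<Sum>b<n. b div s)" by (rule card_Pset[OF assms(2)])
  also have "\<dots> = s * ((n div s) choose 2) + (n mod s) * (n div s)"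
  proof -
    have "n = s * (n div s) + n mod s" by simp
    then have "(\<Sum>b<n. b div s) = (\<Sum>b<s * (n div s) + n mod s. b div s)" by simp
    also have "\<dots> = (\<Sum>b<s * (n div s). b div s) + (n mod s) * (n div s)"
      by (rule sum_div_q) (use assms(2) in \<open>simp add: less_imp_le\<close>)
    also have "\<dots> = s * ((n div s) choose 2) + (n mod s) * (n div s)"
      using sum_div_a[OF assms(2)] by simp
    finally show ?thesis .
  qed
  also have "\<dots> = (n mod s) * (((n - n mod s) div s + 1) choose 2) + (s - n mod s) * (((n - n mod s) div s) choose 2)"
    using final_arith[OF assms(2)] by simp
  finally show ?thesis using le unfolding C_def crossings_crset by simp
qed

end
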